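(* Assume [LJ1]–[LJ4]. Then $B(\theta,\gamma)\le B_{BJ}(\theta)\le B(\theta,\gamma)+B_{IJ}$ for every $\theta>0$, and $B_{IJ}>0$. Moreover, if $\theta>0$ is such that there exists $\eta_\theta>0$ with $\frac12J_1(\gamma)+J_2\big(\frac{t+\gamma}{2}\big)\le0$ for all $t\in\mathbb R$ with $J_1(t)<J_1(\theta)+2\eta_\theta$, then $B(\theta,\gamma)<B_{BJ}(\theta)$.
   Context: Potentials: $J_1,J_2:\mathbb R\to(-\infty,+\infty]$; $J_{CB}:=J_1+J_2$; $J_0(z):=J_2(z)+\frac12\inf\{J_1(z_1)+J_1(z_2):z_1+z_2=2z\}$; $J_0^{**}$ is the convex lower semicontinuous envelope of $J_0$. Hypotheses: [LJ1] $\{z:J_0(z)=J_0^{**}(z)\}\cap\{z:J_0\text{ is affine in a neighbourhood of }z\}=\emptyset$. [LJ2] for every $z$ with $J_0(z)=J_0^{**}(z)$, the set $\{(z_1,z_2):z_1+z_2=2z,\ J_0(z)=J_2(z)+\frac12(J_1(z_1)+J_1(z_2))\}$ has exactly one element. [LJ3] $J_1,J_2$ are $C^{1,\alpha}$ on their domains for some $0<\alpha\le1$, $J_0$ is $C^1$ on its domain, $\operatorname{dom}J_1=\operatorname{dom}J_2\supset(0,+\infty)$, $\lim_{z\to+\infty}J_j(z)=0$ ($j=1,2$) and $\lim_{z\to+\infty}J_0(z)=:J_0(+\infty)\in\mathbb R$. [LJ4] there is a convex $\Psi:\mathbb R\to[0,+\infty]$ with $\lim_{z\to-\infty}\Psi(z)/|z|=+\infty$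 and constants $c_1,c_2>0$ with $c_1(\Psi(z)-1)\le J_j(z)\le c_2\max\{\Psi(z),|z|\}$ for all $z\in\mathbb R$, $j=1,2$; there are $\delta_1,\delta_2,\gamma>0$ with $\{\delta_j\}=\operatorname{argmin}J_j$ and $\{\gamma\}=\operatorname{argmin}J_0$; $J_j$ is strictly convex on $(-\infty,\delta_j)\cap\operatorname{dom}J_j$; $J_0(\gamma)<J_0(+\infty)$; and $J_0(z)=J_0^{**}(z)$ for all $z\le\gamma$. Boundary layer energies (with $\mathbb N=\{0,1,2,\dots\}$): for $\theta>0$, $B(\theta,\gamma):=\inf_{N\in\mathbb N}\min\{\frac12J_1(v^1-v^0)+\sum_{i\ge0}[J_2(\frac{v^{i+2}-v^i}{2})+\frac12J_1(v^{i+2}-v^{i+1})+\frac12J_1(v^{i+1}-v^i)-J_0(\gamma)]:v:\mathbb N\to\mathbb R,\ v^0=0,\ v^1=\theta,\ v^{i+1}-v^i=\gamma\ \forall i\ge N\}$; $B_b(\theta):=\inf_{k\in\mathbb N}\min\{\frac12J_1(v^1-v^0)+\sum_{i=0}^{k-1}[J_2(\frac{v^{i+2}-v^i}{2})+\frac12J_1(v^{i+2}-v^{i+1})+\frac12J_1(v^{i+1}-v^i)-J_0(\gamma)]:v^{k+1}=0,\ v^{k+1}-v^k=\theta\}$; $B(\gamma):=\inf_{N\in\mathbb N}\min\{\frac12J_1(v^1-v^0)+\sum_{i\ge0}[J_2(\frac{v^{i+2}-v^i}{2})+\frac12J_1(v^{i+2}-v^{i+1})+\frac12J_1(v^{i+1}-v^i)-J_0(\gamma)]:v:\mathbb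 N\to\mathbb R,\ v^0=0,\ v^{i+1}-v^i=\gamma\ \forall i\ge N\}$; $B_{BJ}(\theta):=\frac12J_1(\theta)+B_b(\theta)+B(\gamma)-2J_0(\gamma)$; $B_{IJ}:=2B(\gamma)-2J_0(\gamma)$. *)

theory Defs
  imports Complex_Main "HOL-Library.Extended_Real"
begin

(* Potentials are extended-real valued, J :: real \<Rightarrow> ereal, never -\<infinity>. *)

definition edom :: "(real \<Rightarrow> ereal) \<Rightarrow> real set" where
  "edom J = {z. J z < \<infinity>}"

definition J0 :: "(real \<Rightarrow> ereal) \<Rightarrow> (real \<Rightarrow> ereal) \<Rightarrow> real \<Rightarrow> ereal" where
  "J0 J1 J2 z = J2 z + ereal (1/2) * Inf {J1 z1 + J1 z2 | z1 z2. z1 + z2 = 2 * z}"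

definition conj :: "(real \<Rightarrow> ereal) \<Rightarrow> real \<Rightarrow> ereal" where
  "conj f p = (SUP z. ereal (p * z) - f z)"

definition biconj :: "(real \<Rightarrow> ereal) \<Rightarrow> real \<Rightarrow> ereal" where
  "biconj f z = (SUP p. ereal (p * z) - conj f p)"

definition locally_affine_at :: "(real \<Rightarrow> ereal) \<Rightarrow> real \<Rightarrow> bool" where
  "locally_affine_at f z \<longleftrightarrow>
     (\<exists>e>0. \<exists>a b. \<forall>y. \<bar>y - z\<bar> < e \<longrightarrow> f y = ereal (a * y + b))"

definition C1alpha_on_dom :: "real \<Rightarrow> (real \<Rightarrow> ereal) \<Rightarrow> bool" where
  "C1alpha_on_dom \<alpha> J \<longleftrightarrow>
     (\<exists>J'. (\<forall>x\<in>edom J. ((\<lambda>y. real_of_ereal (J y)) has_real_derivative J' x) (at x within edom J))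
        \<and> (\<forall>K. compact K \<and> K \<subseteq> edom J \<longrightarrow>
              (\<exists>L. \<forall>x\<in>K. \<forall>y\<in>K. \<bar>J' x - J' y\<bar> \<le> L * \<bar>x - y\<bar> powr \<alpha>)))"

definition C1_on_dom :: "(real \<Rightarrow> ereal) \<Rightarrow> bool" where
  "C1_on_dom J \<longleftrightarrow>
     (\<exists>J'. (\<forall>x\<in>edom J. ((\<lambda>y. real_of_ereal (J y)) has_real_derivative J' x) (at x within edom J))
        \<and> continuous_on (edom J) J')"

definition ereal_convex :: "(real \<Rightarrow> ereal) \<Rightarrow> bool" where
  "ereal_convex f \<longleftrightarrow> (\<forall>x y t. 0 \<le> t \<and> t \<le> 1 \<longrightarrow>
      f ((1 - t) * x + t * y) \<le> ereal (1 - t) * f x + ereal t * f y)"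

definition strictly_convex_on_set :: "real set \<Rightarrow> (real \<Rightarrow> ereal) \<Rightarrow> bool" where
  "strictly_convex_on_set S f \<longleftrightarrow> (\<forall>x\<in>S. \<forall>y\<in>S. \<forall>t. x \<noteq> y \<and> 0 < t \<and> t < 1 \<longrightarrow>
      f ((1 - t) * x + t * y) < ereal (1 - t) * f x + ereal t * f y)"

definition cell :: "(real \<Rightarrow> ereal) \<Rightarrow> (real \<Rightarrow> ereal) \<Rightarrow> real \<Rightarrow> (nat \<Rightarrow> real) \<Rightarrow> nat \<Rightarrow> ereal" where
  "cell J1 J2 \<gamma> v i = J2 ((v (i+2) - v i) / 2) + ereal (1/2) * J1 (v (i+2) - v (i+1))
      + ereal (1/2) * J1 (v (i+1) - v i) - J0 J1 J2 \<gamma>"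

definition chain_energy :: "(real \<Rightarrow> ereal) \<Rightarrow> (real \<Rightarrow> ereal) \<Rightarrow> real \<Rightarrow> (nat \<Rightarrow> real) \<Rightarrow> ereal" where
  "chain_energy J1 J2 \<gamma> v = ereal (1/2) * J1 (v 1 - v 0) + lim (\<lambda>n. \<Sum>i<n. cell J1 J2 \<gamma> v i)"

definition Btg :: "(real \<Rightarrow> ereal) \<Rightarrow> (real \<Rightarrow> ereal) \<Rightarrow> real \<Rightarrow> real \<Rightarrow> ereal" where
  "Btg J1 J2 \<theta> \<gamma> = (INF v \<in> {v. \<exists>N::nat. v 0 = 0 \<and> v 1 = \<theta> \<and> (\<forall>i\<ge>N. v (i+1) - v i = \<gamma>)}.
       chain_energy J1 J2 \<gamma> v)"

definition Bg :: "(real \<Rightarrow> ereal) \<Rightarrow> (real \<Rightarrow> ereal) \<Rightarrow> real \<Rightarrow> ereal" where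
  "Bg J1 J2 \<gamma> = (INF v \<in> {v. \<exists>N::nat. v 0 = 0 \<and> (\<forall>i\<ge>N. v (i+1) - v i = \<gamma>)}.
       chain_energy J1 J2 \<gamma> v)"

definition Bb :: "(real \<Rightarrow> ereal) \<Rightarrow> (real \<Rightarrow> ereal) \<Rightarrow> real \<Rightarrow> real \<Rightarrow> ereal" where
  "Bb J1 J2 \<gamma> \<theta> = (INF kv \<in> {(k, v). v (Suc k) = 0 \<and> v (Suc k) - v k = \<theta>}.
       ereal (1/2) * J1 (snd kv 1 - snd kv 0) + (\<Sum>i<fst kv. cell J1 J2 \<gamma> (snd kv) i))"

definition BBJ :: "(real \<Rightarrow> ereal) \<Rightarrow> (real \<Rightarrow> ereal) \<Rightarrow> real \<Rightarrow> real \<Rightarrow> ereal" where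
  "BBJ J1 J2 \<gamma> \<theta> = ereal (1/2) * J1 \<theta> + Bb J1 J2 \<gamma> \<theta> + Bg J1 J2 \<gamma> - 2 * J0 J1 J2 \<gamma>"

definition BIJ :: "(real \<Rightarrow> ereal) \<Rightarrow> (real \<Rightarrow> ereal) \<Rightarrow> real \<Rightarrow> ereal" where
  "BIJ J1 J2 \<gamma> = 2 * Bg J1 J2 \<gamma> - 2 * J0 J1 J2 \<gamma>"

end

theory Submission imports Defs begin

lemma sum_split_add: "(\<Sum>i<m+n. (f::nat\<Rightarrow>'a::comm_monoid_add) i) = (\<Sum>i<m. f i) + (\<Sum>j<n. f (m+j))"
  by (induct n) (simp_all add: add.assoc)

lemma cell_cong:
  assumes "v (i+1) - v i = w (j+1) - w j" "v (i+2) - v (i+1) = w (j+2) - w (j+1)"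
  shows "cell J1 J2 \<gamma> v i = cell J1 J2 \<gamma> w j"
proof -
  have "(v (i+2) - v i)/2 = (w (j+2) - w j)/2" using assms by argo
  thus ?thesis unfolding cell_def by (simp only: assms)
qed

lemma cell_cong_rev:
  assumes "v (i+1) - v i = w (j+2) - w (j+1)" "v (i+2) - v (i+1) = w (j+1) - w j"
  shows "cell J1 J2 \<gamma> v i = cell J1 J2 \<gamma> w j"
proof -
  have e: "(v (i+2) - v i)/2 = (w (j+2) - w j)/2" using assms by argo
  have "\<And>A B C::ereal. A + B + C = A + C + B" by (simp add: ac_simps)
  thus ?thesis using assms e unfolding cell_def by (metis (no_types, lifting))
qed

lemma cell_nonneg:
  assumes n1: "\<forall>z. J1 z \<noteq> -\<infinity>" and min: "\<forall>z. J0 J1 J2 \<gamma> \<le> J0 J1 J2 z"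
    and fin: "\<bar>J0 J1 J2 \<gamma>\<bar> \<noteq> \<infinity>"
  shows "0 \<le> cell J1 J2 \<gamma> v i"
proof -
  define z where "z = (v (i+2) - v i)/2"
  define a where "a = v (i+1) - v i"
  define b where "b = v (i+2) - v (i+1)"
  have "a + b = 2*z" by (simp add: a_def b_def z_def)
  hence "J1 a + J1 b \<in> {J1 z1 + J1 z2 | z1 z2. z1 + z2 = 2*z}" by blast
  hence "Inf {J1 z1 + J1 z2 | z1 z2. z1 + z2 = 2*z} \<le> J1 a + J1 b"
    by (rule Inf_lower)
  then have "ereal (1/2) * Inf {J1 z1 + J1 z2 | z1 z2. z1 + z2 = 2*z} \<le> ereal (1/2) * (J1 a + J1 b)"
    by (rule ereal_mult_left_mono) simp
  then have "J0 J1 J2 z \<le> J2 z + ereal (1/2) * (J1 a + J1 b)"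
    unfolding J0_def by (rule add_left_mono)
  moreover have "ereal (1/2) * (J1 a + J1 b) = ereal (1/2) * J1 b + ereal (1/2) * J1 a"
    using n1 by (cases "J1 a"; cases "J1 b") auto
  ultimately have le: "J0 J1 J2 \<gamma> \<le> J2 z + ereal (1/2) * J1 b + ereal (1/2) * J1 a"
    using min by (metis add.assoc order.trans)
  have "cell J1 J2 \<gamma> v i = J2 z + ereal (1/2) * J1 b + ereal (1/2) * J1 a - J0 J1 J2 \<gamma>"
    unfolding cell_def z_def a_def b_def by simp
  also have "\<dots> \<ge> 0" using le fin
    by (cases "J0 J1 J2 \<gamma>"; cases "J2 z + ereal (1/2) * J1 b + ereal (1/2) * J1 a") auto
  finally show ?thesis .
qed

lemma energy_eq:
  assumes cz: "J2 \<gamma> + ereal (1/2) * J1 \<gamma> + ereal (1/2) * J1 \<gamma> - J0 J1 J2 \<gamma> = 0"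
    and N: "\<forall>i\<ge>N. v (i+1) - v i = \<gamma>" and n: "n \<ge> N"
  shows "chain_energy J1 J2 \<gamma> v = ereal (1/2) * J1 (v 1 - v 0) + (\<Sum>i<n. cell J1 J2 \<gamma> v i)"
proof -
  have z: "cell J1 J2 \<gamma> v i = 0" if "i \<ge> N" for i
  proof -
    have a: "v (i+1) - v i = \<gamma>" "v (i+2) - v (i+1) = \<gamma>" using N that by auto
    have "(v (i+2) - v i)/2 = \<gamma>" using a by argo
    thus ?thesis using cz unfolding cell_def by (simp only: a)
  qed
  have s: "(\<Sum>i<m. cell J1 J2 \<gamma> v i) = (\<Sum>i<N. cell J1 J2 \<gamma> v i)" if "m \<ge> N" for m
    using that by (induct m rule: dec_induct) (auto simp: z)
  have "(\<lambda>m. \<Sum>i<m. cell J1 J2 \<gamma> v i) \<longlonglongrightarrow> (\<Sum>i<N. cell J1 J2 \<gamma> v i)"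
    by (rule tendsto_eventually) (auto simp: eventually_at_top_linorder intro!: exI[of _ N] s)
  then have "lim (\<lambda>m. \<Sum>i<m. cell J1 J2 \<gamma> v i) = (\<Sum>i<N. cell J1 J2 \<gamma> v i)" by (rule limI)
  thus ?thesis unfolding chain_energy_def using s[OF n] by simp
qed

lemma fin_ex: "(x::ereal) \<noteq> \<infinity> \<Longrightarrow> x \<noteq> -\<infinity> \<Longrightarrow> \<exists>r. x = ereal r"
  by (cases x) auto

lemma fin_sum2: "(a::ereal) \<noteq> -\<infinity> \<Longrightarrow> b \<noteq> -\<infinity> \<Longrightarrow> a + b < ereal r \<Longrightarrow> \<exists>ra rb. a = ereal ra \<and> b = ereal rb"
  by (cases a; cases b) auto

lemma crack_energy:
  fixes x u :: "nat \<Rightarrow> real" and L :: real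
  assumes cz: "J2 \<gamma> + ereal (1/2) * J1 \<gamma> + ereal (1/2) * J1 \<gamma> - J0 J1 J2 \<gamma> = 0"
    and x0: "x (Suc k) = 0" and x1: "x (Suc k) - x k = \<theta>"
    and u0: "u 0 = 0" and uN: "\<forall>i\<ge>N. u (i+1) - u i = \<gamma>"
  defines "z \<equiv> \<lambda>i. if i \<le> k+1 then - x (k+1-i) else L - x 0 + u (i-(k+2))"
  shows "z \<in> {v. \<exists>N. v 0 = 0 \<and> v 1 = \<theta> \<and> (\<forall>i\<ge>N. v (i+1) - v i = \<gamma>)}"
    and "chain_energy J1 J2 \<gamma> z = ereal (1/2) * J1 \<theta> + ((\<Sum>i<k. cell J1 J2 \<gamma> x i)
       + (J2 ((L + (x 1 - x 0))/2) + ereal (1/2) * J1 L + ereal (1/2) * J1 (x 1 - x 0) - J0 J1 J2 \<gamma>)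
       + (J2 ((L + (u 1 - u 0))/2) + ereal (1/2) * J1 (u 1 - u 0) + ereal (1/2) * J1 L - J0 J1 J2 \<gamma>)
       + (\<Sum>j<N. cell J1 J2 \<gamma> u j))"
proof -
  have zN: "\<forall>i\<ge>k+2+N. z (i+1) - z i = \<gamma>"
  proof (intro allI impI)
    fix i assume i: "k+2+N \<le> i"
    have "u (i - (k+2) + 1) - u (i-(k+2)) = \<gamma>" using uN i by auto
    moreover have "i + 1 - (k+2) = i - (k+2) + 1" using i by arith
    ultimately show "z (i+1) - z i = \<gamma>" using i by (simp add: z_def)
  qed
  have z0: "z 0 = 0" using x0 by (simp add: z_def)
  have z1: "z 1 = \<theta>" using x0 x1 by (simp add: z_def)
  show "z \<in> {v. \<exists>N. v 0 = 0 \<and> v 1 = \<theta> \<and> (\<forall>i\<ge>N. v (i+1) - v i = \<gamma>)}"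
    using z0 z1 zN by blast
  have E: "chain_energy J1 J2 \<gamma> z = ereal (1/2) * J1 (z 1 - z 0) + (\<Sum>i<(k+2)+N. cell J1 J2 \<gamma> z i)"
    by (rule energy_eq[OF cz zN]) simp
  have S: "(\<Sum>i<(k+2)+N. cell J1 J2 \<gamma> z i) = (\<Sum>i<k. cell J1 J2 \<gamma> z i) + cell J1 J2 \<gamma> z k
      + cell J1 J2 \<gamma> z (k+1) + (\<Sum>j<N. cell J1 J2 \<gamma> z (k+2+j))"
    unfolding sum_split_add by (simp add: add.assoc numeral_2_eq_2)
  have A: "(\<Sum>i<k. cell J1 J2 \<gamma> z i) = (\<Sum>i<k. cell J1 J2 \<gamma> x i)"
  proof -
    have "cell J1 J2 \<gamma> z i = cell J1 J2 \<gamma> x (k - Suc i)" if "i < k" for i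
    proof (rule cell_cong_rev)
      have e1: "k + 1 - i = k - Suc i + 2" "k - i = k - Suc i + 1" "k + 1 - (i+1) = k - i"
         "k + 1 - (i+2) = k - Suc i" using that by arith+
      show "z (i + 1) - z i = x (k - Suc i + 2) - x (k - Suc i + 1)"
        using that e1 by (simp add: z_def)
      show "z (i + 2) - z (i + 1) = x (k - Suc i + 1) - x (k - Suc i)"
        using that e1 by (simp add: z_def)
    qed
    hence "(\<Sum>i<k. cell J1 J2 \<gamma> z i) = (\<Sum>i<k. cell J1 J2 \<gamma> x (k - Suc i))" by simp
    also have "\<dots> = (\<Sum>i<k. cell J1 J2 \<gamma> x i)" by (rule sum.nat_diff_reindex)
    finally show ?thesis .
  qed
  have B: "(\<Sum>j<N. cell J1 J2 \<gamma> z (k+2+j)) = (\<Sum>j<N. cell J1 J2 \<gamma> u j)"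
  proof (rule sum.cong[OF refl], rule cell_cong)
    fix j
    show "z (k + 2 + j + 1) - z (k + 2 + j) = u (j + 1) - u j" by (simp add: z_def)
    show "z (k + 2 + j + 2) - z (k + 2 + j + 1) = u (j + 2) - u (j + 1)" by (simp add: z_def)
  qed
  have Ck: "cell J1 J2 \<gamma> z k = J2 ((L + (x 1 - x 0))/2) + ereal (1/2) * J1 L + ereal (1/2) * J1 (x 1 - x 0) - J0 J1 J2 \<gamma>"
  proof -
    have a: "z (k+2) - z (k+1) = L" "z (k+1) - z k = x 1 - x 0" "(z (k+2) - z k)/2 = (L + (x 1 - x 0))/2"
      using u0 by (simp_all add: z_def)
    show ?thesis unfolding cell_def by (simp only: a)
  qed
  have Ck1: "cell J1 J2 \<gamma> z (k+1) = J2 ((L + (u 1 - u 0))/2) + ereal (1/2) * J1 (u 1 - u 0) + ereal (1/2) * J1 L - J0 J1 J2 \<gamma>"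
  proof -
    have e: "k + 3 - (k+2) = 1" by simp
    have a: "z (k+1+2) - z (k+1+1) = u 1 - u 0" "z (k+1+1) - z (k+1) = L"
       "(z (k+1+2) - z (k+1))/2 = (L + (u 1 - u 0))/2"
      using u0 by (simp_all add: z_def e)
    show ?thesis unfolding cell_def by (simp only: a)
  qed
  show "chain_energy J1 J2 \<gamma> z = ereal (1/2) * J1 \<theta> + ((\<Sum>i<k. cell J1 J2 \<gamma> x i)
       + (J2 ((L + (x 1 - x 0))/2) + ereal (1/2) * J1 L + ereal (1/2) * J1 (x 1 - x 0) - J0 J1 J2 \<gamma>)
       + (J2 ((L + (u 1 - u 0))/2) + ereal (1/2) * J1 (u 1 - u 0) + ereal (1/2) * J1 L - J0 J1 J2 \<gamma>)
       + (\<Sum>j<N. cell J1 J2 \<gamma> u j))"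
    unfolding E S A B Ck Ck1 z0 z1 by simp
qed


lemma ext_energy:
  fixes x :: "nat \<Rightarrow> real"
  assumes cz: "J2 \<gamma> + ereal (1/2) * J1 \<gamma> + ereal (1/2) * J1 \<gamma> - J0 J1 J2 \<gamma> = 0"
    and x0: "x (Suc k) = 0" and x1: "x (Suc k) - x k = \<theta>"
  defines "w \<equiv> \<lambda>i. if i \<le> k+1 then - x (k+1-i) else - x 0 + real (i-(k+1)) * \<gamma>"
  shows "w \<in> {v. \<exists>N. v 0 = 0 \<and> v 1 = \<theta> \<and> (\<forall>i\<ge>N. v (i+1) - v i = \<gamma>)}"
    and "chain_energy J1 J2 \<gamma> w = ereal (1/2) * J1 \<theta> + ((\<Sum>i<k. cell J1 J2 \<gamma> x i)
       + (J2 (((x 1 - x 0) + \<gamma>)/2) + ereal (1/2) * J1 \<gamma> + ereal (1/2) * J1 (x 1 - x 0) - J0 J1 J2 \<gamma>))"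
proof -
  have wN: "\<forall>i\<ge>k+1. w (i+1) - w i = \<gamma>"
  proof (intro allI impI)
    fix i assume i: "k+1 \<le> i"
    have "real (i + 1 - (k+1)) = real (i - (k+1)) + 1" using i by (simp add: of_nat_diff)
    thus "w (i+1) - w i = \<gamma>" using i by (auto simp add: w_def algebra_simps)
  qed
  have z0: "w 0 = 0" using x0 by (simp add: w_def)
  have z1: "w 1 = \<theta>" using x0 x1 by (simp add: w_def)
  show "w \<in> {v. \<exists>N. v 0 = 0 \<and> v 1 = \<theta> \<and> (\<forall>i\<ge>N. v (i+1) - v i = \<gamma>)}"
    using z0 z1 wN by blast
  have E: "chain_energy J1 J2 \<gamma> w = ereal (1/2) * J1 (w 1 - w 0) + (\<Sum>i<k+1. cell J1 J2 \<gamma> w i)"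
    by (rule energy_eq[OF cz wN]) simp
  have S: "(\<Sum>i<k+1. cell J1 J2 \<gamma> w i) = (\<Sum>i<k. cell J1 J2 \<gamma> w i) + cell J1 J2 \<gamma> w k"
    by simp
  have A: "(\<Sum>i<k. cell J1 J2 \<gamma> w i) = (\<Sum>i<k. cell J1 J2 \<gamma> x i)"
  proof -
    have "cell J1 J2 \<gamma> w i = cell J1 J2 \<gamma> x (k - Suc i)" if "i < k" for i
    proof (rule cell_cong_rev)
      have e1: "k + 1 - i = k - Suc i + 2" "k - i = k - Suc i + 1" "k + 1 - (i+1) = k - i"
         "k + 1 - (i+2) = k - Suc i" using that by arith+
      show "w (i + 1) - w i = x (k - Suc i + 2) - x (k - Suc i + 1)"
        using that e1 by (simp add: w_def)
      show "w (i + 2) - w (i + 1) = x (k - Suc i + 1) - x (k - Suc i)"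
        using that e1 by (simp add: w_def)
    qed
    hence "(\<Sum>i<k. cell J1 J2 \<gamma> w i) = (\<Sum>i<k. cell J1 J2 \<gamma> x (k - Suc i))" by simp
    also have "\<dots> = (\<Sum>i<k. cell J1 J2 \<gamma> x i)" by (rule sum.nat_diff_reindex)
    finally show ?thesis .
  qed
  have Ck: "cell J1 J2 \<gamma> w k = J2 (((x 1 - x 0) + \<gamma>)/2) + ereal (1/2) * J1 \<gamma> + ereal (1/2) * J1 (x 1 - x 0) - J0 J1 J2 \<gamma>"
  proof -
    have e: "k + 2 - (k+1) = 1" by simp
    have a: "w (k+2) - w (k+1) = \<gamma>" "w (k+1) - w k = x 1 - x 0" "(w (k+2) - w k)/2 = ((x 1 - x 0) + \<gamma>)/2"
      by (simp_all add: w_def e)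
    show ?thesis unfolding cell_def by (simp only: a)
  qed
  show "chain_energy J1 J2 \<gamma> w = ereal (1/2) * J1 \<theta> + ((\<Sum>i<k. cell J1 J2 \<gamma> x i)
       + (J2 (((x 1 - x 0) + \<gamma>)/2) + ereal (1/2) * J1 \<gamma> + ereal (1/2) * J1 (x 1 - x 0) - J0 J1 J2 \<gamma>))"
    unfolding E S A Ck z0 z1 by simp
qed

lemma join_energy:
  fixes u v :: "nat \<Rightarrow> real"
  assumes v0: "v 0 = 0" and v1: "v 1 = \<theta>"
    and vN: "\<forall>i\<ge>N1. v (i+1) - v i = \<gamma>" and uN: "\<forall>i\<ge>N2. u (i+1) - u i = \<gamma>"
  defines "P \<equiv> N1 + N2 + 1"
  defines "x \<equiv> \<lambda>i. if i \<le> P then u i - u P - v (P+1) else - v (2*P+1-i)"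
  shows "(2*P, x) \<in> {(k, v). v (Suc k) = 0 \<and> v (Suc k) - v k = \<theta>}"
    and "ereal (1/2) * J1 (x 1 - x 0) + (\<Sum>i<2*P. cell J1 J2 \<gamma> x i)
         = ereal (1/2) * J1 (u 1 - u 0) + ((\<Sum>i<P. cell J1 J2 \<gamma> u i) + (\<Sum>i<P. cell J1 J2 \<gamma> v i))"
proof -
  have P1: "P \<ge> 1" "P \<ge> N1" "P \<ge> N2" by (simp_all add: P_def)
  have xr: "x i = - v (2*P+1-i)" if "P \<le> i" for i
  proof (cases "i = P")
    case True thus ?thesis by (simp add: x_def)
  next
    case False thus ?thesis using that by (simp add: x_def)
  qed
  have xs: "x (Suc (2*P)) = 0" "x (Suc (2*P)) - x (2*P) = \<theta>"
    using xr[of "Suc (2*P)"] xr[of "2*P"] v0 v1 by simp_all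
  show "(2*P, x) \<in> {(k, v). v (Suc k) = 0 \<and> v (Suc k) - v k = \<theta>}" using xs by simp
  have S: "(\<Sum>i<2*P. cell J1 J2 \<gamma> x i) = (\<Sum>i<P. cell J1 J2 \<gamma> x i) + (\<Sum>j<P. cell J1 J2 \<gamma> x (P+j))"
    using sum_split_add[of "cell J1 J2 \<gamma> x" P P] by (simp add: mult_2)
  have A: "(\<Sum>i<P. cell J1 J2 \<gamma> x i) = (\<Sum>i<P. cell J1 J2 \<gamma> u i)"
  proof (rule sum.cong[OF refl], rule cell_cong)
    fix i assume i: "i \<in> {..<P}"
    have xu: "x j = u j - u P - v (P+1)" if "j \<le> P + 1" for j
    proof (cases "j = P + 1")
      case True
      have "u (P+1) - u P = \<gamma>" "v (P+1) - v P = \<gamma>" using uN vN P1 by auto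
      moreover have "x j = - v P" using xr[of j] True by simp
      ultimately show ?thesis using True by simp
    next
      case False thus ?thesis using that by (simp add: x_def)
    qed
    show "x (i + 1) - x i = u (i + 1) - u i" using xu[of i] xu[of "i+1"] i by simp
    show "x (i + 2) - x (i + 1) = u (i + 2) - u (i + 1)" using xu[of "i+2"] xu[of "i+1"] i by simp
  qed
  have B: "(\<Sum>j<P. cell J1 J2 \<gamma> x (P+j)) = (\<Sum>j<P. cell J1 J2 \<gamma> v j)"
  proof -
    have "cell J1 J2 \<gamma> x (P+j) = cell J1 J2 \<gamma> v (P - Suc j)" if "j < P" for j
    proof (rule cell_cong_rev)
      have e1: "2*P+1-(P+j) = P - Suc j + 2" "2*P+1-(P+j+1) = P - Suc j + 1" "2*P+1-(P+j+2) = P - Suc j"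
        using that by arith+
      show "x (P + j + 1) - x (P + j) = v (P - Suc j + 2) - v (P - Suc j + 1)"
        using xr[of "P+j"] xr[of "P+j+1"] e1 by simp
      show "x (P + j + 2) - x (P + j + 1) = v (P - Suc j + 1) - v (P - Suc j)"
        using xr[of "P+j+2"] xr[of "P+j+1"] e1 by simp
    qed
    hence "(\<Sum>j<P. cell J1 J2 \<gamma> x (P+j)) = (\<Sum>j<P. cell J1 J2 \<gamma> v (P - Suc j))" by simp
    also have "\<dots> = (\<Sum>j<P. cell J1 J2 \<gamma> v j)" by (rule sum.nat_diff_reindex)
    finally show ?thesis .
  qed
  have x01: "x 1 - x 0 = u 1 - u 0" using P1 by (simp add: x_def)
  show "ereal (1/2) * J1 (x 1 - x 0) + (\<Sum>i<2*P. cell J1 J2 \<gamma> x i)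
         = ereal (1/2) * J1 (u 1 - u 0) + ((\<Sum>i<P. cell J1 J2 \<gamma> u i) + (\<Sum>i<P. cell J1 J2 \<gamma> v i))"
    unfolding S A B x01 ..
qed


theorem lemma5p5:
  fixes J1 J2 :: "real \<Rightarrow> ereal" and \<gamma> :: real
  assumes noninf1: "\<forall>z. J1 z \<noteq> -\<infinity>" and noninf2: "\<forall>z. J2 z \<noteq> -\<infinity>"
  \<comment> \<open>[LJ1]\<close>
  assumes LJ1: "{z. J0 J1 J2 z = biconj (J0 J1 J2) z} \<inter> {z. locally_affine_at (J0 J1 J2) z} = {}"
  \<comment> \<open>[LJ2] (for z in the domain of J0)\<close>
  assumes LJ2: "\<forall>z. J0 J1 J2 z = biconj (J0 J1 J2) z \<and> J0 J1 J2 z < \<infinity> \<longrightarrow>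
      (\<exists>!p. fst p + snd p = 2 * z \<and> J0 J1 J2 z = J2 z + ereal (1/2) * (J1 (fst p) + J1 (snd p)))"
  \<comment> \<open>[LJ3]\<close>
  assumes LJ3: "\<exists>\<alpha>. 0 < \<alpha> \<and> \<alpha> \<le> 1 \<and> C1alpha_on_dom \<alpha> J1 \<and> C1alpha_on_dom \<alpha> J2"
    and LJ3_C1: "C1_on_dom (J0 J1 J2)"
    and LJ3_dom: "edom J1 = edom J2" "{0<..} \<subseteq> edom J1"
    and LJ3_lim1: "(J1 \<longlongrightarrow> 0) at_top" and LJ3_lim2: "(J2 \<longlongrightarrow> 0) at_top"
    and LJ3_lim0: "((J0 J1 J2) \<longlongrightarrow> ereal J0inf) at_top"
  \<comment> \<open>[LJ4]\<close>
  assumes LJ4_Psi: "\<exists>\<Psi> :: real \<Rightarrow> ereal. (\<forall>z. 0 \<le> \<Psi> z) \<and> ereal_convex \<Psi>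
      \<and> ((\<lambda>z. \<Psi> z / ereal \<bar>z\<bar>) \<longlongrightarrow> \<infinity>) at_bot
      \<and> (\<exists>c1 c2. c1 > 0 \<and> c2 > 0 \<and>
          (\<forall>z. ereal c1 * (\<Psi> z - 1) \<le> J1 z \<and> J1 z \<le> ereal c2 * max (\<Psi> z) (ereal \<bar>z\<bar>)
             \<and> ereal c1 * (\<Psi> z - 1) \<le> J2 z \<and> J2 z \<le> ereal c2 * max (\<Psi> z) (ereal \<bar>z\<bar>)))"
    and LJ4_delta1: "\<exists>\<delta>1>0. (\<forall>z. J1 \<delta>1 \<le> J1 z \<and> (J1 z = J1 \<delta>1 \<longrightarrow> z = \<delta>1))
                        \<and> strictly_convex_on_set ({..<\<delta>1} \<inter> edom J1) J1"
    and LJ4_delta2: "\<exists>\<delta>2>0. (\<forall>z. J2 \<delta>2 \<le> J2 z \<and> (J2 z = J2 \<delta>2 \<longrightarrow> z = \<delta>2))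
                        \<and> strictly_convex_on_set ({..<\<delta>2} \<inter> edom J2) J2"
    and LJ4_gamma: "\<gamma> > 0" "\<forall>z. J0 J1 J2 \<gamma> \<le> J0 J1 J2 z \<and> (J0 J1 J2 z = J0 J1 J2 \<gamma> \<longrightarrow> z = \<gamma>)"
    and LJ4_less: "J0 J1 J2 \<gamma> < ereal J0inf"
    and LJ4_conv: "\<forall>z\<le>\<gamma>. J0 J1 J2 z = biconj (J0 J1 J2) z"
  shows "(\<forall>\<theta>>0. Btg J1 J2 \<theta> \<gamma> \<le> BBJ J1 J2 \<gamma> \<theta> \<and> BBJ J1 J2 \<gamma> \<theta> \<le> Btg J1 J2 \<theta> \<gamma> + BIJ J1 J2 \<gamma>)
    \<and> BIJ J1 J2 \<gamma> > 0
    \<and> (\<forall>\<theta>>0. (\<exists>\<eta>>0. \<forall>t. J1 t < J1 \<theta> + ereal (2 * \<eta>) \<longrightarrow>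
                 ereal (1/2) * J1 \<gamma> + J2 ((t + \<gamma>) / 2) \<le> 0)
          \<longrightarrow> Btg J1 J2 \<theta> \<gamma> < BBJ J1 J2 \<gamma> \<theta>)"
  proof -
  define c where "c = J0 J1 J2 \<gamma>"
  obtain \<delta>1 where d1: "\<delta>1 > 0" "\<forall>z. J1 \<delta>1 \<le> J1 z" using LJ4_delta1 by blast
  have fin1: "J1 z \<noteq> \<infinity>" if "z > 0" for z using LJ3_dom(2) that unfolding edom_def by auto
  have fin2: "J2 z \<noteq> \<infinity>" if "z > 0" for z using LJ3_dom that unfolding edom_def by auto
  have cmin: "\<forall>z. c \<le> J0 J1 J2 z" using LJ4_gamma(2) by (simp add: c_def)
  have cfin: "c \<noteq> \<infinity>" using LJ4_less by (auto simp: c_def)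
  have "\<exists>!p. fst p + snd p = 2*\<gamma> \<and> c = J2 \<gamma> + ereal (1/2) * (J1 (fst p) + J1 (snd p))"
    using LJ2 LJ4_conv cfin unfolding c_def by (simp add: less_top)
  then obtain p where p: "fst p + snd p = 2*\<gamma>" "c = J2 \<gamma> + ereal (1/2) * (J1 (fst p) + J1 (snd p))"
    and uq: "\<And>q. fst q + snd q = 2*\<gamma> \<and> c = J2 \<gamma> + ereal (1/2) * (J1 (fst q) + J1 (snd q)) \<Longrightarrow> q = p"
    by metis
  have "(snd p, fst p) = p" by (rule uq) (use p in \<open>simp add: add.commute\<close>)
  hence "fst p = snd p" by (metis fst_conv snd_conv)
  hence pg: "fst p = \<gamma>" "snd p = \<gamma>" using p(1) by auto
  obtain j1g where j1g: "J1 \<gamma> = ereal j1g" using fin1 LJ4_gamma(1) noninf1 fin_ex by blast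
  obtain j2g where j2g: "J2 \<gamma> = ereal j2g" using fin2 LJ4_gamma(1) noninf2 fin_ex by blast
  define cr where "cr = j2g + j1g"
  have cr: "c = ereal cr" using p(2) pg j1g j2g by (simp add: cr_def)
  have cr': "J0 J1 J2 \<gamma> = ereal cr" using cr c_def by simp
  have cz: "J2 \<gamma> + ereal (1/2) * J1 \<gamma> + ereal (1/2) * J1 \<gamma> - J0 J1 J2 \<gamma> = 0"
    using cr' j1g j2g by (simp add: cr_def)
  have cabs: "\<bar>J0 J1 J2 \<gamma>\<bar> \<noteq> \<infinity>" using cr' by simp
  have cnn: "\<And>v i. 0 \<le> cell J1 J2 \<gamma> v i"
    by (rule cell_nonneg[OF _ _ cabs]) (use noninf1 cmin c_def in auto)
  have snn: "\<And>v n. 0 \<le> (\<Sum>i<n. cell J1 J2 \<gamma> v i)" by (rule sum_nonneg) (use cnn in auto)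
  obtain jd where jd: "J1 \<delta>1 = ereal jd" using d1(2) fin1[of 1] noninf1 fin_ex
    by (metis ereal_infty_less_eq(1) zero_less_one)
  have half_low: "ereal (jd/2) \<le> ereal (1/2) * J1 z" for z
  proof -
    have "ereal (1/2) * J1 \<delta>1 \<le> ereal (1/2) * J1 z" by (rule ereal_mult_left_mono) (use d1 in auto)
    thus ?thesis using jd by simp
  qed
  have J0inf_le: "J0inf \<le> jd/2"
  proof (rule ccontr)
    assume nle: "\<not> J0inf \<le> jd/2"
    define g where "g = J0inf - jd/2"
    have g: "g > 0" using nle g_def by simp
    have "eventually (\<lambda>z. ereal (J0inf - g/4) < J0 J1 J2 z) at_top"
      using order_tendstoD(1)[OF LJ3_lim0, of "ereal (J0inf - g/4)"] g by simp
    then obtain Z0 where Z0: "\<And>z. z \<ge> Z0 \<Longrightarrow> ereal (J0inf - g/4) < J0 J1 J2 z"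
      by (auto simp: eventually_at_top_linorder)
    have "eventually (\<lambda>z. J1 z < ereal (g/4)) at_top"
      using order_tendstoD(2)[OF LJ3_lim1, of "ereal (g/4)"] g by simp
    then obtain Z1 where Z1: "\<And>z. z \<ge> Z1 \<Longrightarrow> J1 z < ereal (g/4)"
      by (auto simp: eventually_at_top_linorder)
    have "eventually (\<lambda>z. J2 z < ereal (g/4)) at_top"
      using order_tendstoD(2)[OF LJ3_lim2, of "ereal (g/4)"] g by simp
    then obtain Z2 where Z2: "\<And>z. z \<ge> Z2 \<Longrightarrow> J2 z < ereal (g/4)"
      by (auto simp: eventually_at_top_linorder)
    define z where "z = max (max Z0 Z2) (max (Z1 + \<delta>1) (\<delta>1 + 1))"
    have zz: "z \<ge> Z1 + \<delta>1" "z \<ge> \<delta>1 + 1" "z \<ge> Z0" "z \<ge> Z2" unfolding z_def by auto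
    have zp: "z > 0" "z \<ge> Z0" "z \<ge> Z2" "2*z - \<delta>1 \<ge> Z1" "2*z - \<delta>1 > 0"
      using d1(1) zz by linarith+
    have "\<delta>1 + (2*z - \<delta>1) = 2*z" by simp
    hence "J1 \<delta>1 + J1 (2*z-\<delta>1) \<in> {J1 z1 + J1 z2 | z1 z2. z1 + z2 = 2*z}" by blast
    hence "Inf {J1 z1 + J1 z2 | z1 z2. z1 + z2 = 2*z} \<le> J1 \<delta>1 + J1 (2*z - \<delta>1)" by (rule Inf_lower)
    hence "ereal (1/2) * Inf {J1 z1 + J1 z2 | z1 z2. z1 + z2 = 2*z} \<le> ereal (1/2) * (J1 \<delta>1 + J1 (2*z-\<delta>1))"
      by (rule ereal_mult_left_mono) simp
    hence le: "J0 J1 J2 z \<le> J2 z + ereal (1/2) * (J1 \<delta>1 + J1 (2*z-\<delta>1))"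
      unfolding J0_def by (rule add_left_mono)
    obtain a1 where a1: "J1 (2*z-\<delta>1) = ereal a1" using fin1 zp noninf1 fin_ex by blast
    obtain a2 where a2: "J2 z = ereal a2" using fin2 zp noninf2 fin_ex by blast
    have a1l: "a1 < g/4" using Z1[of "2*z-\<delta>1"] zp a1 by simp
    have a2l: "a2 < g/4" using Z2[of z] zp a2 by simp
    have "ereal (J0inf - g/4) < J2 z + ereal (1/2) * (J1 \<delta>1 + J1 (2*z-\<delta>1))"
      using Z0[of z] zp le by (meson less_le_trans)
    hence "J0inf - g/4 < a2 + (jd + a1)/2" using a1 a2 jd by simp
    thus False using a1l a2l g_def g by argo
  qed
  have cjd: "cr < jd/2" using cr LJ4_less J0inf_le c_def by simp
  have nmi: "ereal (1/2) * J1 z \<noteq> -\<infinity>" for z using half_low[of z] by auto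
  have nms: "(\<Sum>i<n. cell J1 J2 \<gamma> v i) \<noteq> -\<infinity>" for v n using snn[of v n] by auto
  have Elow: "ereal (jd/2) \<le> chain_energy J1 J2 \<gamma> v" if "\<forall>i\<ge>N. v (i+1) - v i = \<gamma>" for v N
  proof -
    have "chain_energy J1 J2 \<gamma> v = ereal (1/2) * J1 (v 1 - v 0) + (\<Sum>i<N. cell J1 J2 \<gamma> v i)"
      by (rule energy_eq[OF cz that]) simp
    also have "\<dots> \<ge> ereal (1/2) * J1 (v 1 - v 0)" by (rule add_increasing2) (use snn in auto)
    finally show ?thesis using half_low order_trans by blast
  qed
  define Gs where "Gs = {v. \<exists>N::nat. v 0 = 0 \<and> (\<forall>i\<ge>N. v (i+1) - v i = \<gamma>)}"
  have BgE: "Bg J1 J2 \<gamma> = (INF v\<in>Gs. chain_energy J1 J2 \<gamma> v)" by (simp add: Bg_def Gs_def)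
  have Bg_low: "ereal (jd/2) \<le> Bg J1 J2 \<gamma>"
    unfolding BgE
  proof (rule INF_greatest)
    fix v assume "v \<in> Gs"
    then obtain N where "\<forall>i\<ge>N. v (i+1) - v i = \<gamma>" unfolding Gs_def by blast
    thus "ereal (jd/2) \<le> chain_energy J1 J2 \<gamma> v" by (rule Elow)
  qed
  have Bg_up: "Bg J1 J2 \<gamma> \<le> ereal (j1g/2)"
  proof -
    define g0 where "g0 = (\<lambda>i::nat. real i * \<gamma>)"
    have gN: "\<forall>i\<ge>0. g0 (i+1) - g0 i = \<gamma>" by (simp add: g0_def algebra_simps)
    have g0G: "g0 \<in> Gs" using gN unfolding Gs_def by (auto simp: g0_def)
    have "chain_energy J1 J2 \<gamma> g0 = ereal (1/2) * J1 (g0 1 - g0 0) + (\<Sum>i<0. cell J1 J2 \<gamma> g0 i)"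
      by (rule energy_eq[OF cz gN]) simp
    also have "\<dots> = ereal (j1g/2)" using j1g by (simp add: g0_def)
    finally show ?thesis unfolding BgE using g0G by (metis INF_lower)
  qed
  obtain bg where bg: "Bg J1 J2 \<gamma> = ereal bg" using Bg_low Bg_up
    by (cases "Bg J1 J2 \<gamma>") auto
  have bgl: "jd/2 \<le> bg" using Bg_low bg by simp
  have bgc: "cr < bg" using bgl cjd by simp
  have BIJ: "BIJ J1 J2 \<gamma> = ereal (2*bg - 2*cr)" using bg cr' by (simp add: BIJ_def)
  have part2: "BIJ J1 J2 \<gamma> > 0" using BIJ bgc by simp
  have key: "(Btg J1 J2 \<theta> \<gamma> \<le> BBJ J1 J2 \<gamma> \<theta> \<and> BBJ J1 J2 \<gamma> \<theta> \<le> Btg J1 J2 \<theta> \<gamma> + BIJ J1 J2 \<gamma>)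
      \<and> ((\<exists>\<eta>>0. \<forall>t. J1 t < J1 \<theta> + ereal (2 * \<eta>) \<longrightarrow>
                 ereal (1/2) * J1 \<gamma> + J2 ((t + \<gamma>) / 2) \<le> 0)
          \<longrightarrow> Btg J1 J2 \<theta> \<gamma> < BBJ J1 J2 \<gamma> \<theta>)" if th: "\<theta> > 0" for \<theta>
  proof -
    obtain jt where jt: "J1 \<theta> = ereal jt" using fin1 th noninf1 fin_ex by blast
    define TGs where "TGs = {v. \<exists>N::nat. v 0 = 0 \<and> v 1 = \<theta> \<and> (\<forall>i\<ge>N. v (i+1) - v i = \<gamma>)}"
    have BtgE: "Btg J1 J2 \<theta> \<gamma> = (INF v\<in>TGs. chain_energy J1 J2 \<gamma> v)" by (simp add: Btg_def TGs_def)
    define BBs where "BBs = {(k, v). v (Suc k) = 0 \<and> v (Suc k) - v k = \<theta>}"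
    define Eb where "Eb = (\<lambda>kv::nat \<times> (nat \<Rightarrow> real). ereal (1/2) * J1 (snd kv 1 - snd kv 0) + (\<Sum>i<fst kv. cell J1 J2 \<gamma> (snd kv) i))"
    have BbE: "Bb J1 J2 \<gamma> \<theta> = (INF kv\<in>BBs. Eb kv)" by (simp add: Bb_def BBs_def Eb_def)
    define x0w where "x0w = (\<lambda>i::nat. if i = 0 then -\<theta> else 0)"
    have xw: "x0w (Suc 0) = 0" "x0w (Suc 0) - x0w 0 = \<theta>" by (simp_all add: x0w_def)
    have Bb_up: "Bb J1 J2 \<gamma> \<theta> \<le> ereal (jt/2)"
    proof -
      have "(0, x0w) \<in> BBs" using xw by (simp add: BBs_def)
      moreover have "Eb (0, x0w) = ereal (jt/2)" using jt by (simp add: Eb_def x0w_def)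
      ultimately show ?thesis unfolding BbE by (metis INF_lower)
    qed
    have Eb_low: "ereal (1/2) * J1 (snd kv 1 - snd kv 0) \<le> Eb kv" for kv
      unfolding Eb_def by (rule add_increasing2) (use snn in auto)
    have Bb_low: "ereal (jd/2) \<le> Bb J1 J2 \<gamma> \<theta>"
      unfolding BbE by (rule INF_greatest) (use Eb_low half_low order_trans in blast)
    obtain bb where bb: "Bb J1 J2 \<gamma> \<theta> = ereal bb" using Bb_low Bb_up
      by (cases "Bb J1 J2 \<gamma> \<theta>") auto
    have Btg_low: "ereal (jd/2) \<le> Btg J1 J2 \<theta> \<gamma>"
      unfolding BtgE
    proof (rule INF_greatest)
      fix v assume "v \<in> TGs"
      then obtain N where "\<forall>i\<ge>N. v (i+1) - v i = \<gamma>" unfolding TGs_def by blast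
      thus "ereal (jd/2) \<le> chain_energy J1 J2 \<gamma> v" by (rule Elow)
    qed
    have Btg_up: "Btg J1 J2 \<theta> \<gamma> < \<infinity>"
    proof -
      note W = ext_energy[OF cz xw(1) xw(2)]
      have t: "x0w 1 - x0w 0 = \<theta>" by (simp add: x0w_def)
      obtain p0 where p0: "J2 ((\<theta> + \<gamma>)/2) = ereal p0"
        using fin2[of "(\<theta> + \<gamma>)/2"] th LJ4_gamma(1) noninf2 fin_ex by auto
      have "Btg J1 J2 \<theta> \<gamma> \<le> chain_energy J1 J2 \<gamma> (\<lambda>i. if i \<le> 0 + 1 then - x0w (0 + 1 - i) else - x0w 0 + real (i - (0 + 1)) * \<gamma>)"
        unfolding BtgE by (rule INF_lower) (unfold TGs_def, rule W(1))
      also have "\<dots> < \<infinity>" unfolding W(2) t using jt p0 j1g cr' by simp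
      finally show ?thesis .
    qed
    obtain btg where btg: "Btg J1 J2 \<theta> \<gamma> = ereal btg" using Btg_low Btg_up
      by (cases "Btg J1 J2 \<theta> \<gamma>") auto
    have BBJ: "BBJ J1 J2 \<gamma> \<theta> = ereal (jt/2 + bb + bg - 2*cr)"
      by (simp add: BBJ_def jt bb bg cr')
    have A: "btg \<le> jt/2 + bb + bg - 2*cr"
    proof (rule field_le_epsilon)
      fix e :: real assume e: "0 < e"
      define e' where "e' = e/5"
      have e': "e' > 0" using e by (simp add: e'_def)
      have "(INF kv\<in>BBs. Eb kv) < ereal (bb + e')" using e' by (simp add: BbE[symmetric] bb)
      then obtain k x where kx: "(k, x) \<in> BBs" "Eb (k, x) < ereal (bb + e')"
        by (auto simp: INF_less_iff)
      have xs: "x (Suc k) = 0" "x (Suc k) - x k = \<theta>" using kx(1) by (auto simp: BBs_def)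
      have "(INF v\<in>Gs. chain_energy J1 J2 \<gamma> v) < ereal (bg + e')" using e' by (simp add: BgE[symmetric] bg)
      then obtain u where u: "u \<in> Gs" "chain_energy J1 J2 \<gamma> u < ereal (bg + e')"
        by (auto simp: INF_less_iff)
      then obtain N where u0: "u 0 = 0" and uN: "\<forall>i\<ge>N. u (i+1) - u i = \<gamma>" unfolding Gs_def by blast
      have Eu: "chain_energy J1 J2 \<gamma> u = ereal (1/2) * J1 (u 1 - u 0) + (\<Sum>i<N. cell J1 J2 \<gamma> u i)"
        by (rule energy_eq[OF cz uN]) simp
      have "ereal (1/2) * J1 (x 1 - x 0) + (\<Sum>i<k. cell J1 J2 \<gamma> x i) < ereal (bb + e')"
        using kx(2) by (simp add: Eb_def)
      then obtain ra sx where rasx: "ereal (1/2) * J1 (x 1 - x 0) = ereal ra" "(\<Sum>i<k. cell J1 J2 \<gamma> x i) = ereal sx"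
        using fin_sum2[OF nmi[of "x 1 - x 0"] nms[of x k]] by blast
      have rasx_l: "ra + sx < bb + e'" using kx(2) rasx by (simp add: Eb_def)
      obtain rb su where rbsu: "ereal (1/2) * J1 (u 1 - u 0) = ereal rb" "(\<Sum>i<N. cell J1 J2 \<gamma> u i) = ereal su"
        using fin_sum2[OF nmi[of "u 1 - u 0"] nms[of u N] u(2)[unfolded Eu]] by blast
      have rbsu_l: "rb + su < bg + e'" using u(2) Eu rbsu by simp
      have "eventually (\<lambda>z. J1 z < ereal e') at_top"
        using order_tendstoD(2)[OF LJ3_lim1, of "ereal e'"] e' by simp
      then obtain Z1 where Z1: "\<And>z. z \<ge> Z1 \<Longrightarrow> J1 z < ereal e'"
        by (auto simp: eventually_at_top_linorder)
      have "eventually (\<lambda>z. J2 z < ereal e') at_top"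
        using order_tendstoD(2)[OF LJ3_lim2, of "ereal e'"] e' by simp
      then obtain Z2 where Z2: "\<And>z. z \<ge> Z2 \<Longrightarrow> J2 z < ereal e'"
        by (auto simp: eventually_at_top_linorder)
      define L where "L = \<bar>Z1\<bar> + 2*\<bar>Z2\<bar> + \<bar>x 1 - x 0\<bar> + \<bar>u 1 - u 0\<bar> + 1"
      have Lp: "L > 0" "L \<ge> Z1" "(L + (x 1 - x 0))/2 \<ge> Z2" "(L + (x 1 - x 0))/2 > 0"
        "(L + (u 1 - u 0))/2 \<ge> Z2" "(L + (u 1 - u 0))/2 > 0"
        unfolding L_def by (simp_all add: abs_if split: if_splits)
      obtain l where l: "J1 L = ereal l" using fin1 Lp noninf1 fin_ex by blast
      obtain p where p: "J2 ((L + (x 1 - x 0))/2) = ereal p" using fin2 Lp noninf2 fin_ex by blast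
      obtain q where q: "J2 ((L + (u 1 - u 0))/2) = ereal q" using fin2 Lp noninf2 fin_ex by blast
      have lpq: "l < e'" "p < e'" "q < e'" using Z1[of L] Z2[of "(L + (x 1 - x 0))/2"]
          Z2[of "(L + (u 1 - u 0))/2"] Lp l p q by simp_all
      note Z = crack_energy[OF cz xs(1) xs(2) u0 uN, of L]
      have "Btg J1 J2 \<theta> \<gamma> \<le> chain_energy J1 J2 \<gamma> (\<lambda>i. if i \<le> k + 1 then - x (k + 1 - i) else L - x 0 + u (i - (k + 2)))"
        unfolding BtgE by (rule INF_lower) (unfold TGs_def, rule Z(1))
      also have "\<dots> = ereal (jt/2 + (sx + (p + l/2 + ra - cr) + (q + rb + l/2 - cr) + su))"
        unfolding Z(2) using jt rasx rbsu l p q cr' by simp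
      finally have "btg \<le> jt/2 + (sx + (p + l/2 + ra - cr) + (q + rb + l/2 - cr) + su)" using btg by simp
      thus "btg \<le> jt/2 + bb + bg - 2*cr + e" using rasx_l rbsu_l lpq e'_def by linarith
    qed
    have B: "jt/2 + bb \<le> btg + bg"
    proof (rule field_le_epsilon)
      fix e :: real assume e: "0 < e"
      have "(INF v\<in>TGs. chain_energy J1 J2 \<gamma> v) < ereal (btg + e/2)" using e by (simp add: BtgE[symmetric] btg)
      then obtain v where v: "v \<in> TGs" "chain_energy J1 J2 \<gamma> v < ereal (btg + e/2)"
        by (auto simp: INF_less_iff)
      then obtain N1 where v0: "v 0 = 0" and v1: "v 1 = \<theta>" and vN: "\<forall>i\<ge>N1. v (i+1) - v i = \<gamma>"
        unfolding TGs_def by blast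
      have "(INF v\<in>Gs. chain_energy J1 J2 \<gamma> v) < ereal (bg + e/2)" using e by (simp add: BgE[symmetric] bg)
      then obtain u where u: "u \<in> Gs" "chain_energy J1 J2 \<gamma> u < ereal (bg + e/2)"
        by (auto simp: INF_less_iff)
      then obtain N2 where u0: "u 0 = 0" and uN: "\<forall>i\<ge>N2. u (i+1) - u i = \<gamma>" unfolding Gs_def by blast
      note J1f = join_energy(1)[OF v0 v1 vN uN] and J2f = join_energy(2)[where ?J1.0=J1 and ?J2.0=J2, OF v0 v1 vN uN]
      have Ev: "chain_energy J1 J2 \<gamma> v = ereal (1/2) * J1 (v 1 - v 0) + (\<Sum>i<N1+N2+1. cell J1 J2 \<gamma> v i)"
        by (rule energy_eq[OF cz vN]) simp
      have Eu: "chain_energy J1 J2 \<gamma> u = ereal (1/2) * J1 (u 1 - u 0) + (\<Sum>i<N1+N2+1. cell J1 J2 \<gamma> u i)"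
        by (rule energy_eq[OF cz uN]) simp
      obtain rv sv where rvsv: "ereal (1/2) * J1 (v 1 - v 0) = ereal rv" "(\<Sum>i<N1+N2+1. cell J1 J2 \<gamma> v i) = ereal sv"
        using fin_sum2[OF nmi[of "v 1 - v 0"] nms[of v "N1+N2+1"] v(2)[unfolded Ev]] by blast
      obtain ru su where rusu: "ereal (1/2) * J1 (u 1 - u 0) = ereal ru" "(\<Sum>i<N1+N2+1. cell J1 J2 \<gamma> u i) = ereal su"
        using fin_sum2[OF nmi[of "u 1 - u 0"] nms[of u "N1+N2+1"] u(2)[unfolded Eu]] by blast
      have rv: "rv = jt/2" using rvsv(1) v0 v1 jt by simp
      have "Bb J1 J2 \<gamma> \<theta> \<le> Eb (2*(N1+N2+1), (\<lambda>i. if i \<le> N1+N2+1 then u i - u (N1+N2+1) - v (N1+N2+1+1) else - v (2*(N1+N2+1)+1-i)))"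
        unfolding BbE by (rule INF_lower) (unfold BBs_def, rule J1f)
      also have "\<dots> = ereal (ru + (su + sv))" unfolding Eb_def using J2f rusu rvsv by simp
      finally have "bb \<le> ru + (su + sv)" using bb by simp
      moreover have "rv + sv < btg + e/2" using v(2) Ev rvsv by simp
      moreover have "ru + su < bg + e/2" using u(2) Eu rusu by simp
      ultimately show "jt/2 + bb \<le> btg + bg + e" using rv by linarith
    qed
    have C: "(\<exists>\<eta>>0. \<forall>t. J1 t < J1 \<theta> + ereal (2 * \<eta>) \<longrightarrow>
                 ereal (1/2) * J1 \<gamma> + J2 ((t + \<gamma>) / 2) \<le> 0)
          \<longrightarrow> Btg J1 J2 \<theta> \<gamma> < BBJ J1 J2 \<gamma> \<theta>"
    proof
      assume "\<exists>\<eta>>0. \<forall>t. J1 t < J1 \<theta> + ereal (2 * \<eta>) \<longrightarrow> ereal (1/2) * J1 \<gamma> + J2 ((t + \<gamma>) / 2) \<le> 0"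
      then obtain \<eta> where eta: "\<eta> > 0" and cond: "\<And>t. J1 t < J1 \<theta> + ereal (2 * \<eta>) \<Longrightarrow> ereal (1/2) * J1 \<gamma> + J2 ((t + \<gamma>) / 2) \<le> 0"
        by blast
      define e where "e = min \<eta> ((bg - cr)/2)"
      have e: "e > 0" "e \<le> \<eta>" "e \<le> (bg - cr)/2" using eta bgc unfolding e_def by (auto simp: min_def)
      have "(INF kv\<in>BBs. Eb kv) < ereal (bb + e)" using e by (simp add: BbE[symmetric] bb)
      then obtain k x where kx: "(k, x) \<in> BBs" "Eb (k, x) < ereal (bb + e)"
        by (auto simp: INF_less_iff)
      have xs: "x (Suc k) = 0" "x (Suc k) - x k = \<theta>" using kx(1) by (auto simp: BBs_def)
      have "ereal (1/2) * J1 (x 1 - x 0) + (\<Sum>i<k. cell J1 J2 \<gamma> x i) < ereal (bb + e)"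
        using kx(2) by (simp add: Eb_def)
      then obtain ra sx where rasx: "ereal (1/2) * J1 (x 1 - x 0) = ereal ra" "(\<Sum>i<k. cell J1 J2 \<gamma> x i) = ereal sx"
        using fin_sum2[OF nmi[of "x 1 - x 0"] nms[of x k]] by blast
      have rasx_l: "ra + sx < bb + e" using kx(2) rasx by (simp add: Eb_def)
      have sx0: "0 \<le> sx" using snn[of x k] rasx(2) by simp
      obtain ja where ja: "J1 (x 1 - x 0) = ereal ja" using rasx(1) noninf1
        by (cases "J1 (x 1 - x 0)") auto
      have ra: "ra = ja/2" using rasx(1) ja by simp
      have "ja < jt + 2*\<eta>" using rasx_l ra sx0 e Bb_up bb by simp
      hence "J1 (x 1 - x 0) < J1 \<theta> + ereal (2*\<eta>)" using ja jt by simp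
      hence c1: "ereal (1/2) * J1 \<gamma> + J2 (((x 1 - x 0) + \<gamma>) / 2) \<le> 0" by (rule cond)
      obtain pa where pa: "J2 (((x 1 - x 0) + \<gamma>) / 2) = ereal pa" using c1 j1g noninf2
        by (cases "J2 (((x 1 - x 0) + \<gamma>) / 2)") auto
      have pal: "j1g/2 + pa \<le> 0" using c1 pa j1g by simp
      note W = ext_energy[OF cz xs(1) xs(2)]
      have "Btg J1 J2 \<theta> \<gamma> \<le> chain_energy J1 J2 \<gamma> (\<lambda>i. if i \<le> k + 1 then - x (k + 1 - i) else - x 0 + real (i - (k + 1)) * \<gamma>)"
        unfolding BtgE by (rule INF_lower) (unfold TGs_def, rule W(1))
      also have "\<dots> = ereal (jt/2 + (sx + (pa + j1g/2 + ja/2 - cr)))"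
        unfolding W(2) using jt rasx ja pa j1g cr' by simp
      finally have "btg \<le> jt/2 + (sx + (pa + j1g/2 + ja/2 - cr))" using btg by simp
      hence "btg < jt/2 + bb + bg - 2*cr" using pal rasx_l ra e bgc by argo
      thus "Btg J1 J2 \<theta> \<gamma> < BBJ J1 J2 \<gamma> \<theta>" using btg BBJ by simp
    qed
    have "Btg J1 J2 \<theta> \<gamma> \<le> BBJ J1 J2 \<gamma> \<theta>" using A btg BBJ by simp
    moreover have "BBJ J1 J2 \<gamma> \<theta> \<le> Btg J1 J2 \<theta> \<gamma> + BIJ J1 J2 \<gamma>" using B btg BBJ BIJ by simp
    ultimately show ?thesis using C by blast
  qed
  show ?thesis using key part2 by blast
qed

end
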